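(* Let $\alpha\neq0$ be real, let $\mathbf{u}=(u_1,u_2)$ and $\mathbf{v}=(-u_1,u_2)$ be constant unit vectors with $u_1u_2\neq0$, and let $\mathbf{f}=(f_1,f_2)\in C_c^2(S^1;\mathbb{D})$. Then $D_\mathbf{u}D_\mathbf{v}\mathcal{L}_\alpha\mathbf{f}=\partial_{\tilde x_1}f_2-\partial_{\tilde x_2}f_1=\tilde\delta^\perp\mathbf{f}$ and $D_\mathbf{u}D_\mathbf{v}\mathcal{T}_\alpha\mathbf{f}=-(\partial_{\tilde x_1}f_1+\partial_{\tilde x_2}f_2)=-\tilde\delta\mathbf{f}$.
   Context: $\mathbb{D}$ is the open unit disc in $\mathbb{R}^2$; $C_c^2(S^1;\mathbb{D})$ is the space of $C^2$ vector fields with compact support in $\mathbb{D}$. $\mathbf{a}^\perp=(-a_2,a_1)$; $D_\mathbf{u}=\mathbf{u}\cdot\nabla$. The weighted longitudinal and transverse V-line transforms are $\mathcal{L}_\alpha\mathbf{f}(\mathbf{x})=-\int_0^\infty\mathbf{u}\cdot\mathbf{f}(\mathbf{x}+t\mathbf{u})\,dt+\alpha\int_0^\infty\mathbf{v}\cdot\mathbf{f}(\mathbf{x}+t\mathbf{v})\,dt$ and $\mathcal{T}_\alpha\mathbf{f}(\mathbf{x})=-\int_0^\infty\mathbf{u}^\perp\cdot\mathbf{f}(\mathbf{x}+t\mathbf{u})\,dt+\alpha\int_0^\infty\mathbf{v}^\perp\cdot\mathbf{f}(\mathbf{x}+t\mathbf{v})\,dt$. The differential operators $\partial_{\tilde x_1}=-(1+\alpha)u_1u_2\partial_{x_1}+(1-\alpha)u_2^2\partial_{x_2}$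 and $\partial_{\tilde x_2}=(1-\alpha)u_1^2\partial_{x_1}-(1+\alpha)u_1u_2\partial_{x_2}$ (derivatives in the linear coordinates $\tilde x$ with $x_1=-(1+\alpha)u_1u_2\tilde x_1+(1-\alpha)u_1^2\tilde x_2$, $x_2=(1-\alpha)u_2^2\tilde x_1-(1+\alpha)u_1u_2\tilde x_2$); $\tilde\delta\mathbf{f}=\partial_{\tilde x_1}f_1+\partial_{\tilde x_2}f_2$, $\tilde\delta^\perp\mathbf{f}=\partial_{\tilde x_1}f_2-\partial_{\tilde x_2}f_1$. *)

theory Defs
  imports "HOL-Analysis.Analysis"
begin

definition dirD :: "real^2 \<Rightarrow> (real^2 \<Rightarrow> real) \<Rightarrow> real^2 \<Rightarrow> real" where
  "dirD w g x = frechet_derivative g (at x) w"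

definition pd :: "2 \<Rightarrow> (real^2 \<Rightarrow> real) \<Rightarrow> real^2 \<Rightarrow> real" where
  "pd i g x = frechet_derivative g (at x) (axis i 1)"

definition C2_field :: "(real^2 \<Rightarrow> real^2) \<Rightarrow> bool" where
  "C2_field f \<longleftrightarrow>
     (\<forall>x. f differentiable (at x)) \<and>
     (\<forall>w x. (\<lambda>y. frechet_derivative f (at y) w) differentiable (at x)) \<and>
     (\<forall>w w'. continuous_on UNIV
        (\<lambda>y. frechet_derivative (\<lambda>z. frechet_derivative f (at z) w) (at y) w'))"

definition Cc2_disc :: "(real^2 \<Rightarrow> real^2) \<Rightarrow> bool" where
  "Cc2_disc f \<longleftrightarrow> C2_field f \<and>
     (\<exists>K. compact K \<and> K \<subseteq> ball 0 1 \<and> (\<forall>x. x \<notin> K \<longrightarrow> f x = 0))"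

definition perp :: "real^2 \<Rightarrow> real^2" where
  "perp a = vector [- (a$2), a$1]"

definition Lalpha :: "real \<Rightarrow> real^2 \<Rightarrow> real^2 \<Rightarrow> (real^2 \<Rightarrow> real^2) \<Rightarrow> real^2 \<Rightarrow> real" where
  "Lalpha \<alpha> u v f x =
     - integral {0..} (\<lambda>t::real. u \<bullet> f (x + t *\<^sub>R u))
     + \<alpha> * integral {0..} (\<lambda>t::real. v \<bullet> f (x + t *\<^sub>R v))"

definition Talpha :: "real \<Rightarrow> real^2 \<Rightarrow> real^2 \<Rightarrow> (real^2 \<Rightarrow> real^2) \<Rightarrow> real^2 \<Rightarrow> real" where
  "Talpha \<alpha> u v f x =
     - integral {0..} (\<lambda>t::real. perp u \<bullet> f (x + t *\<^sub>R u))
     + \<alpha> * integral {0..} (\<lambda>t::real. perp v \<bullet> f (x + t *\<^sub>R v))"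

definition dt1 :: "real \<Rightarrow> real^2 \<Rightarrow> (real^2 \<Rightarrow> real) \<Rightarrow> real^2 \<Rightarrow> real" where
  "dt1 \<alpha> u g x = - (1 + \<alpha>) * (u$1) * (u$2) * pd 1 g x + (1 - \<alpha>) * (u$2)^2 * pd 2 g x"

definition dt2 :: "real \<Rightarrow> real^2 \<Rightarrow> (real^2 \<Rightarrow> real) \<Rightarrow> real^2 \<Rightarrow> real" where
  "dt2 \<alpha> u g x = (1 - \<alpha>) * (u$1)^2 * pd 1 g x - (1 + \<alpha>) * (u$1) * (u$2) * pd 2 g x"

definition tdelta :: "real \<Rightarrow> real^2 \<Rightarrow> (real^2 \<Rightarrow> real^2) \<Rightarrow> real^2 \<Rightarrow> real" where
  "tdelta \<alpha> u f x = dt1 \<alpha> u (\<lambda>y. f y $ 1) x + dt2 \<alpha> u (\<lambda>y. f y $ 2) x"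

definition tdelta_perp :: "real \<Rightarrow> real^2 \<Rightarrow> (real^2 \<Rightarrow> real^2) \<Rightarrow> real^2 \<Rightarrow> real" where
  "tdelta_perp \<alpha> u f x = dt1 \<alpha> u (\<lambda>y. f y $ 2) x - dt2 \<alpha> u (\<lambda>y. f y $ 1) x"

end

theory Submission
  imports Defs "HOL-Analysis.Analysis"
begin

lemma int_cut:
  fixes F :: "real \<Rightarrow> real"
  assumes "\<And>t. t \<ge> R \<Longrightarrow> F t = 0" "0 \<le> R"
  shows "integral {0..} F = integral {0..R} F"
proof -
  have "integral {0..} F = integral {0..} (\<lambda>t. if t \<in> {0..R} then F t else 0)"
    by (rule integral_cong) (use assms in auto)
  also have "\<dots> = integral ({0..R} \<inter> {0..}) F" by (rule integral_restrict_Int)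
  also have "{0..R} \<inter> {0..} = {0..R}" by auto
  finally show ?thesis .
qed

lemma deriv_zero_out:
  fixes k :: "real^2 \<Rightarrow> real"
  assumes K3: "\<And>z. 1 \<le> norm z \<Longrightarrow> k z = 0" and z: "2 \<le> norm z"
  shows "frechet_derivative k (at z) h = 0"
proof -
  have "((\<lambda>_. 0) has_derivative (\<lambda>_. 0)) (at z)" by simp
  then have "(k has_derivative (\<lambda>_. 0)) (at z)"
  proof (rule has_derivative_transform_within_open[where s="ball z 1"])
    fix y assume "y \<in> ball z 1"
    then have "dist z y < 1" by simp
    then have "1 \<le> norm y" using z norm_triangle_ineq2[of z y] by (simp add: dist_norm)
    then show "0 = k y" using K3 by simp
  qed auto
  then show ?thesis using frechet_derivative_at by metis
qed

lemma chain_k: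
  fixes k :: "real^2 \<Rightarrow> real"
  assumes K1: "\<And>z. k differentiable (at z)"
  shows "((\<lambda>y. k (y + c)) has_derivative frechet_derivative k (at (y + c))) (at y within S)"
proof -
  have "((\<lambda>y. y + c) has_derivative (\<lambda>h. h)) (at y within S)"
    by (auto intro!: derivative_eq_intros)
  moreover have "(k has_derivative frechet_derivative k (at (y + c))) (at (y + c))"
    using K1 frechet_derivative_works by blast
  ultimately have "((k \<circ> (\<lambda>y. y + c)) has_derivative (frechet_derivative k (at (y + c)) \<circ> (\<lambda>h. h))) (at y within S)"
    by (intro diff_chain_within) (auto intro: has_derivative_at_withinI)
  then show ?thesis by (simp add: o_def)
qed

lemma GI_deriv:
  fixes k :: "real^2 \<Rightarrow> real" and w :: "real^2"
  assumes K1: "\<And>z. k differentiable (at z)"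
    and K2: "\<And>h. continuous_on UNIV (\<lambda>z. frechet_derivative k (at z) h)"
    and K3: "\<And>z. 1 \<le> norm z \<Longrightarrow> k z = 0"
    and w: "w \<noteq> 0"
  shows "((\<lambda>x. integral {0..} (\<lambda>t. k (x + t *\<^sub>R w))) has_derivative
           (\<lambda>h. integral {0..} (\<lambda>t. frechet_derivative k (at (x + t *\<^sub>R w)) h))) (at x)"
proof -
  define R where "R = (norm x + 3) / norm w"
  have nw: "norm w > 0" using w by simp
  have R0: "0 \<le> R" unfolding R_def using nw by simp
  have far: "2 \<le> norm (y + t *\<^sub>R w)" if "y \<in> ball x 1" "R \<le> t" for y t
  proof -
    have "norm y < norm x + 1" using that(1) norm_triangle_ineq2[of y x]
      by (simp add: dist_norm norm_minus_commute)
    moreover have "norm x + 3 \<le> t * norm w"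
      using that(2) nw unfolding R_def by (simp add: field_simps)
    moreover have "norm (t *\<^sub>R w) \<le> norm (y + t *\<^sub>R w) + norm y"
      using norm_triangle_ineq4[of "y + t *\<^sub>R w" y] by simp
    moreover have "norm (t *\<^sub>R w) = t * norm w" using that(2) R0 by simp
    ultimately show ?thesis by linarith
  qed
  have kcont: "continuous_on UNIV k"
    by (meson K1 continuous_at_imp_continuous_on differentiable_imp_continuous_within)
  have Dlin: "bounded_linear (frechet_derivative k (at z))" for z
    using K1 frechet_derivative_works has_derivative_bounded_linear by blast
  define fx where "fx = (\<lambda>y t. Blinfun (frechet_derivative k (at (y + t *\<^sub>R w))))"
  have fxa: "blinfun_apply (fx y t) = frechet_derivative k (at (y + t *\<^sub>R w))" for y t
    unfolding fx_def using Dlin bounded_linear_Blinfun_apply by blast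
  have cont2: "continuous_on S (\<lambda>t. g (y + t *\<^sub>R w))" if "continuous_on UNIV g" for g :: "real^2 \<Rightarrow> real" and S y
  proof (rule continuous_on_compose2[OF that])
    show "continuous_on S (\<lambda>t. y + t *\<^sub>R w)" by (intro continuous_intros)
  qed simp
  have L: "((\<lambda>y. integral (cbox 0 R) (\<lambda>t. k (y + t *\<^sub>R w))) has_derivative blinfun_apply (integral (cbox 0 R) (fx x))) (at x within ball x 1)"
  proof (rule leibniz_rule)
    show "((\<lambda>y. k (y + t *\<^sub>R w)) has_derivative blinfun_apply (fx y t)) (at y within ball x 1)" for y t
      unfolding fxa by (rule chain_k[OF K1])
    show "(\<lambda>t. k (y + t *\<^sub>R w)) integrable_on cbox 0 R" for y
      by (rule integrable_continuous, rule cont2[OF kcont])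
    show "continuous_on (ball x 1 \<times> cbox 0 R) (\<lambda>(y, t). fx y t)"
    proof (rule continuous_on_blinfun_componentwise)
      fix i :: "real^2"
      have "continuous_on (ball x 1 \<times> cbox 0 R) (\<lambda>p. frechet_derivative k (at (fst p + snd p *\<^sub>R w)) i)"
        by (rule continuous_on_compose2[OF K2[of i]]) (auto intro!: continuous_intros)
      then show "continuous_on (ball x 1 \<times> cbox 0 R) (\<lambda>p. blinfun_apply (case p of (y, t) \<Rightarrow> fx y t) i)"
        by (rule continuous_on_eq) (auto simp: fxa)
    qed
  qed auto
  then have L': "((\<lambda>y. integral (cbox 0 R) (\<lambda>t. k (y + t *\<^sub>R w))) has_derivative blinfun_apply (integral (cbox 0 R) (fx x))) (at x)"
  proof -
    have "at x within ball x 1 = at x" by (rule at_within_open) auto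
    then show ?thesis using L by (simp only:)
  qed
  have eqD: "blinfun_apply (integral (cbox 0 R) (fx x)) = (\<lambda>h. integral {0..} (\<lambda>t. frechet_derivative k (at (x + t *\<^sub>R w)) h))"
  proof
    fix h
    have int: "fx x integrable_on cbox 0 R"
    proof (rule integrable_continuous)
      show "continuous_on (cbox 0 R) (fx x)"
        by (rule continuous_on_blinfun_componentwise) (simp add: fxa cont2[OF K2])
    qed
    have "blinfun_apply (integral (cbox 0 R) (fx x)) h = integral {0..R} (\<lambda>t. frechet_derivative k (at (x + t *\<^sub>R w)) h)"
      using blinfun_apply_integral[OF int] by (simp add: fxa)
    also have "\<dots> = integral {0..} (\<lambda>t. frechet_derivative k (at (x + t *\<^sub>R w)) h)"
      by (rule int_cut[symmetric, OF _ R0]) (rule deriv_zero_out[OF K3 far], auto)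
    finally show "blinfun_apply (integral (cbox 0 R) (fx x)) h = integral {0..} (\<lambda>t. frechet_derivative k (at (x + t *\<^sub>R w)) h)" .
  qed
  show ?thesis
  proof (rule has_derivative_transform_within_open[OF L'[unfolded eqD], where s="ball x 1"])
    fix y assume y: "y \<in> ball x 1"
    show "integral (cbox 0 R) (\<lambda>t. k (y + t *\<^sub>R w)) = integral {0..} (\<lambda>t. k (y + t *\<^sub>R w))"
      by (simp, rule int_cut[symmetric, OF _ R0]) (rule K3, use far[OF y] in force)
  qed auto
qed

lemma GI_self:
  fixes k :: "real^2 \<Rightarrow> real" and w :: "real^2"
  assumes K1: "\<And>z. k differentiable (at z)"
    and K3: "\<And>z. 1 \<le> norm z \<Longrightarrow> k z = 0"
    and w: "w \<noteq> 0"
  shows "integral {0..} (\<lambda>t. frechet_derivative k (at (x + t *\<^sub>R w)) w) = - k x"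
proof -
  define R where "R = (norm x + 3) / norm w"
  have nw: "norm w > 0" using w by simp
  have R0: "0 \<le> R" unfolding R_def using nw by simp
  have far: "2 \<le> norm (x + t *\<^sub>R w)" if "R \<le> t" for t
  proof -
    have "norm x + 3 \<le> t * norm w"
      using that nw unfolding R_def by (simp add: field_simps)
    moreover have "norm (t *\<^sub>R w) \<le> norm (x + t *\<^sub>R w) + norm x"
      using norm_triangle_ineq4[of "x + t *\<^sub>R w" x] by simp
    moreover have "norm (t *\<^sub>R w) = t * norm w" using that R0 by simp
    ultimately show ?thesis by linarith
  qed
  have Dlin: "linear (frechet_derivative k (at z))" for z
    using K1 frechet_derivative_works has_derivative_linear by blast
  have "((\<lambda>t. frechet_derivative k (at (x + t *\<^sub>R w)) w) has_integral (k (x + R *\<^sub>R w) - k (x + 0 *\<^sub>R w))) {0..R}"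
  proof (rule fundamental_theorem_of_calculus[OF R0])
    fix t assume "t \<in> {0..R}"
    have "((\<lambda>t. x + t *\<^sub>R w) has_derivative (\<lambda>s. s *\<^sub>R w)) (at t within {0..R})"
      by (auto intro!: derivative_eq_intros)
    moreover have "(k has_derivative frechet_derivative k (at (x + t *\<^sub>R w))) (at (x + t *\<^sub>R w))"
      using K1 frechet_derivative_works by blast
    ultimately have "((k \<circ> (\<lambda>t. x + t *\<^sub>R w)) has_derivative (frechet_derivative k (at (x + t *\<^sub>R w)) \<circ> (\<lambda>s. s *\<^sub>R w))) (at t within {0..R})"
      by (intro diff_chain_within) (auto intro: has_derivative_at_withinI)
    then show "((\<lambda>t. k (x + t *\<^sub>R w)) has_vector_derivative frechet_derivative k (at (x + t *\<^sub>R w)) w) (at t within {0..R})"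
      unfolding has_vector_derivative_def o_def using linear_scale[OF Dlin]
      by (simp add: linear_cmul[OF Dlin])
  qed
  moreover have "k (x + R *\<^sub>R w) = 0" using far[of R] K3 by simp
  ultimately have "integral {0..R} (\<lambda>t. frechet_derivative k (at (x + t *\<^sub>R w)) w) = - k x"
    by (simp add: integral_unique)
  moreover have "integral {0..} (\<lambda>t. frechet_derivative k (at (x + t *\<^sub>R w)) w) = integral {0..R} (\<lambda>t. frechet_derivative k (at (x + t *\<^sub>R w)) w)"
    by (rule int_cut[OF _ R0]) (rule deriv_zero_out[OF K3 far], auto)
  ultimately show ?thesis by simp
qed


lemma deriv_zero_open:
  fixes g :: "'a::real_normed_vector \<Rightarrow> 'b::real_normed_vector"
  assumes "open S" "z \<in> S" "\<And>y. y \<in> S \<Longrightarrow> g y = 0"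
  shows "frechet_derivative g (at z) h = 0"
proof -
  have "((\<lambda>_. 0) has_derivative (\<lambda>_. 0)) (at z)" by simp
  then have "(g has_derivative (\<lambda>_. 0)) (at z)"
    by (rule has_derivative_transform_within_open[where s=S]) (use assms in auto)
  then show ?thesis using frechet_derivative_at by metis
qed

lemma fd_inner:
  fixes g :: "real^2 \<Rightarrow> real^2"
  assumes "g differentiable (at z)"
  shows "frechet_derivative (\<lambda>y. a \<bullet> g y) (at z) h = a \<bullet> frechet_derivative g (at z) h"
    and "((\<lambda>y. a \<bullet> g y) has_derivative (\<lambda>h. a \<bullet> frechet_derivative g (at z) h)) (at z)"
    and "(\<lambda>y. a \<bullet> g y) differentiable (at z)"
proof -
  have D: "(g has_derivative frechet_derivative g (at z)) (at z)"
    using assms frechet_derivative_works by blast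
  show H: "((\<lambda>y. a \<bullet> g y) has_derivative (\<lambda>h. a \<bullet> frechet_derivative g (at z) h)) (at z)"
    by (rule has_derivative_inner_right[OF D])
  show "frechet_derivative (\<lambda>y. a \<bullet> g y) (at z) h = a \<bullet> frechet_derivative g (at z) h"
    using frechet_derivative_at[OF H] by metis
  show "(\<lambda>y. a \<bullet> g y) differentiable (at z)" using H differentiable_def by blast
qed

definition kprops :: "(real^2 \<Rightarrow> real) \<Rightarrow> bool" where
  "kprops k \<longleftrightarrow> (\<forall>z. k differentiable (at z)) \<and>
     (\<forall>h. continuous_on UNIV (\<lambda>z. frechet_derivative k (at z) h)) \<and> (\<forall>z. 1 \<le> norm z \<longrightarrow> k z = 0)"

lemma Cc2_props:
  assumes "Cc2_disc f"
  shows "\<And>z. f differentiable (at z)"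
    and "\<And>z. 1 \<le> norm z \<Longrightarrow> f z = 0"
    and "\<And>z h. 1 \<le> norm z \<Longrightarrow> frechet_derivative f (at z) h = 0"
    and "\<And>w z. (\<lambda>y. frechet_derivative f (at y) w) differentiable (at z)"
    and "\<And>w w'. continuous_on UNIV (\<lambda>y. frechet_derivative (\<lambda>z. frechet_derivative f (at z) w) (at y) w')"
    and "\<And>w. continuous_on UNIV (\<lambda>y. frechet_derivative f (at y) w)"
proof -
  obtain K where K: "compact K" "K \<subseteq> ball 0 1" "\<And>x. x \<notin> K \<Longrightarrow> f x = 0"
    using assms unfolding Cc2_disc_def by blast
  have C2: "C2_field f" using assms unfolding Cc2_disc_def by blast
  have out: "z \<notin> K" if "1 \<le> norm z" for z using K(2) that by auto
  show "\<And>z. f differentiable (at z)" using C2 unfolding C2_field_def by blast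
  show "\<And>z. 1 \<le> norm z \<Longrightarrow> f z = 0" using out K(3) by blast
  show "\<And>z h. 1 \<le> norm z \<Longrightarrow> frechet_derivative f (at z) h = 0"
  proof -
    fix z h assume "1 \<le> norm (z::real^2)"
    then have "z \<in> - K" using out by blast
    moreover have "open (- K)" using K(1) by (simp add: compact_imp_closed open_Compl)
    ultimately have "\<And>i. frechet_derivative (\<lambda>y. f y $ i) (at z) h = 0"
      by (intro deriv_zero_open[where S="- K"]) (auto simp: K(3))
    moreover have "frechet_derivative (\<lambda>y. f y $ i) (at z) h = frechet_derivative f (at z) h $ i" for i
    proof -
      have "(f has_derivative frechet_derivative f (at z)) (at z)"
        using C2 unfolding C2_field_def using frechet_derivative_works by blast
      from bounded_linear.has_derivative[OF bounded_linear_vec_nth this, of i]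
      show ?thesis using frechet_derivative_at by metis
    qed
    ultimately show "frechet_derivative f (at z) h = 0" by (simp add: vec_eq_iff)
  qed
  show D2: "\<And>w z. (\<lambda>y. frechet_derivative f (at y) w) differentiable (at z)"
    using C2 unfolding C2_field_def by blast
  show "\<And>w w'. continuous_on UNIV (\<lambda>y. frechet_derivative (\<lambda>z. frechet_derivative f (at z) w) (at y) w')"
    using C2 unfolding C2_field_def by blast
  show "continuous_on UNIV (\<lambda>y. frechet_derivative f (at y) w)" for w
  proof (rule continuous_at_imp_continuous_on, rule ballI)
    fix y :: "real^2"
    show "isCont (\<lambda>y. frechet_derivative f (at y) w) y"
      using differentiable_imp_continuous_within[OF D2[of w y]] .
  qed
qed

lemma kprops1:
  assumes "Cc2_disc f"
  shows "kprops (\<lambda>z. a \<bullet> f z)"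
  unfolding kprops_def
proof (intro conjI allI impI)
  note P = Cc2_props[OF assms]
  show "(\<lambda>z. a \<bullet> f z) differentiable (at z)" for z using fd_inner(3)[OF P(1)] .
  show "continuous_on UNIV (\<lambda>z. frechet_derivative (\<lambda>z. a \<bullet> f z) (at z) h)" for h
    unfolding fd_inner(1)[OF P(1)] by (intro continuous_intros P(6))
  show "a \<bullet> f z = 0" if "1 \<le> norm z" for z using P(2)[OF that] by simp
qed

lemma kprops2:
  assumes "Cc2_disc f"
  shows "kprops (\<lambda>z. a \<bullet> frechet_derivative f (at z) b)"
  unfolding kprops_def
proof (intro conjI allI impI)
  note P = Cc2_props[OF assms]
  show "(\<lambda>z. a \<bullet> frechet_derivative f (at z) b) differentiable (at z)" for z using fd_inner(3)[OF P(4)] .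
  show "continuous_on UNIV (\<lambda>z. frechet_derivative (\<lambda>z. a \<bullet> frechet_derivative f (at z) b) (at z) h)" for h
    unfolding fd_inner(1)[OF P(4)] by (intro continuous_intros P(5))
  show "a \<bullet> frechet_derivative f (at z) b = 0" if "1 \<le> norm z" for z using P(3)[OF that] by simp
qed

lemma GI_kp:
  assumes "kprops k" "w \<noteq> 0"
  shows "((\<lambda>x. integral {0..} (\<lambda>t. k (x + t *\<^sub>R w))) has_derivative
           (\<lambda>h. integral {0..} (\<lambda>t. frechet_derivative k (at (x + t *\<^sub>R w)) h))) (at x)"
    and "integral {0..} (\<lambda>t. frechet_derivative k (at (x + t *\<^sub>R w)) w) = - k x"
  using GI_deriv[of k w x] GI_self[of k w x] assms unfolding kprops_def by auto



lemma main_generic: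
  fixes f :: "real^2 \<Rightarrow> real^2" and u v p q :: "real^2" and \<alpha> :: real
  assumes f: "Cc2_disc f" and u: "u \<noteq> 0" and v: "v \<noteq> 0"
  shows "dirD u (dirD v (\<lambda>x. - integral {0..} (\<lambda>t. p \<bullet> f (x + t *\<^sub>R u)) + \<alpha> * integral {0..} (\<lambda>t. q \<bullet> f (x + t *\<^sub>R v)))) x
     = p \<bullet> frechet_derivative f (at x) v - \<alpha> * (q \<bullet> frechet_derivative f (at x) u)"
proof -
  note P = Cc2_props[OF f]
  have kp: "kprops (\<lambda>z. p \<bullet> f z)" and kq: "kprops (\<lambda>z. q \<bullet> f z)"
    and k2: "kprops (\<lambda>z. p \<bullet> frechet_derivative f (at z) v)"
    using kprops1[OF f] kprops2[OF f] by auto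
  have fdi: "frechet_derivative (\<lambda>z. a \<bullet> f z) (at y) h = a \<bullet> frechet_derivative f (at y) h" for a y h
    using fd_inner(1)[OF P(1)] .
  have A: "dirD v (\<lambda>x. - integral {0..} (\<lambda>t. p \<bullet> f (x + t *\<^sub>R u)) + \<alpha> * integral {0..} (\<lambda>t. q \<bullet> f (x + t *\<^sub>R v))) y
      = - integral {0..} (\<lambda>t. p \<bullet> frechet_derivative f (at (y + t *\<^sub>R u)) v) - \<alpha> * (q \<bullet> f y)" for y
  proof -
    have H: "((\<lambda>x. - integral {0..} (\<lambda>t. p \<bullet> f (x + t *\<^sub>R u)) + \<alpha> * integral {0..} (\<lambda>t. q \<bullet> f (x + t *\<^sub>R v))) has_derivative
       (\<lambda>h. - integral {0..} (\<lambda>t. frechet_derivative (\<lambda>z. p \<bullet> f z) (at (y + t *\<^sub>R u)) h) + \<alpha> * integral {0..} (\<lambda>t. frechet_derivative (\<lambda>z. q \<bullet> f z) (at (y + t *\<^sub>R v)) h))) (at y)"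
      by (intro has_derivative_add has_derivative_minus has_derivative_mult_right GI_kp(1)[OF kp u] GI_kp(1)[OF kq v])
    have "dirD v (\<lambda>x. - integral {0..} (\<lambda>t. p \<bullet> f (x + t *\<^sub>R u)) + \<alpha> * integral {0..} (\<lambda>t. q \<bullet> f (x + t *\<^sub>R v))) y
       = - integral {0..} (\<lambda>t. frechet_derivative (\<lambda>z. p \<bullet> f z) (at (y + t *\<^sub>R u)) v) + \<alpha> * integral {0..} (\<lambda>t. frechet_derivative (\<lambda>z. q \<bullet> f z) (at (y + t *\<^sub>R v)) v)"
      unfolding dirD_def frechet_derivative_at[OF H, symmetric] by simp
    also have "\<dots> = - integral {0..} (\<lambda>t. p \<bullet> frechet_derivative f (at (y + t *\<^sub>R u)) v) - \<alpha> * (q \<bullet> f y)"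
      using GI_kp(2)[OF kq v, of y] by (simp add: fdi)
    finally show ?thesis .
  qed
  have B: "dirD v (\<lambda>x. - integral {0..} (\<lambda>t. p \<bullet> f (x + t *\<^sub>R u)) + \<alpha> * integral {0..} (\<lambda>t. q \<bullet> f (x + t *\<^sub>R v)))
      = (\<lambda>y. - integral {0..} (\<lambda>t. p \<bullet> frechet_derivative f (at (y + t *\<^sub>R u)) v) - \<alpha> * (q \<bullet> f y))"
    by (rule ext) (rule A)
  have H2: "((\<lambda>y. - integral {0..} (\<lambda>t. p \<bullet> frechet_derivative f (at (y + t *\<^sub>R u)) v) - \<alpha> * (q \<bullet> f y)) has_derivative
     (\<lambda>h. - integral {0..} (\<lambda>t. frechet_derivative (\<lambda>z. p \<bullet> frechet_derivative f (at z) v) (at (x + t *\<^sub>R u)) h) - \<alpha> * (q \<bullet> frechet_derivative f (at x) h))) (at x)"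
    by (intro has_derivative_diff has_derivative_minus has_derivative_mult_right GI_kp(1)[OF k2 u] fd_inner(2)[OF P(1)])
  show ?thesis
    unfolding B dirD_def frechet_derivative_at[OF H2, symmetric]
    using GI_kp(2)[OF k2 u, of x] by simp
qed

lemma fd_comp:
  fixes f :: "real^2 \<Rightarrow> real^2"
  assumes "f differentiable (at x)"
  shows "pd i (\<lambda>y. f y $ j) x = frechet_derivative f (at x) (axis i 1) $ j"
proof -
  have "(f has_derivative frechet_derivative f (at x)) (at x)"
    using assms frechet_derivative_works by blast
  from bounded_linear.has_derivative[OF bounded_linear_vec_nth this, of j]
  show ?thesis unfolding pd_def using frechet_derivative_at by metis
qed

lemma Dexp:
  fixes f :: "real^2 \<Rightarrow> real^2"
  assumes "f differentiable (at x)"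
  shows "frechet_derivative f (at x) h $ j = h$1 * pd 1 (\<lambda>y. f y $ j) x + h$2 * pd 2 (\<lambda>y. f y $ j) x"
proof -
  have lin: "linear (frechet_derivative f (at x))"
    using assms frechet_derivative_works has_derivative_linear by blast
  have hh: "h = h$1 *\<^sub>R axis 1 1 + h$2 *\<^sub>R axis 2 1"
    by (simp add: vec_eq_iff forall_2 axis_def)
  have "frechet_derivative f (at x) h = h$1 *\<^sub>R frechet_derivative f (at x) (axis 1 1) + h$2 *\<^sub>R frechet_derivative f (at x) (axis 2 1)"
    by (subst hh) (simp add: linear_add[OF lin] linear_scale[OF lin])
  then show ?thesis by (simp add: fd_comp[OF assms])
qed

theorem lemma7p1:
  fixes \<alpha> :: real and u v :: "real^2" and f :: "real^2 \<Rightarrow> real^2"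
  assumes "\<alpha> \<noteq> 0"
    and "norm u = 1" and "u$1 * u$2 \<noteq> 0"
    and "v = vector [- (u$1), u$2]"
    and "Cc2_disc f"
  shows "\<forall>x. dirD u (dirD v (Lalpha \<alpha> u v f)) x
               = dt1 \<alpha> u (\<lambda>y. f y $ 2) x - dt2 \<alpha> u (\<lambda>y. f y $ 1) x
           \<and> dt1 \<alpha> u (\<lambda>y. f y $ 2) x - dt2 \<alpha> u (\<lambda>y. f y $ 1) x = tdelta_perp \<alpha> u f x
           \<and> dirD u (dirD v (Talpha \<alpha> u v f)) x
               = - (dt1 \<alpha> u (\<lambda>y. f y $ 1) x + dt2 \<alpha> u (\<lambda>y. f y $ 2) x)
           \<and> - (dt1 \<alpha> u (\<lambda>y. f y $ 1) x + dt2 \<alpha> u (\<lambda>y. f y $ 2) x) = - tdelta \<alpha> u f x"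
proof
  fix x
  have f: "Cc2_disc f" by fact
  note P = Cc2_props[OF f]
  have v1: "v$1 = - u$1" and v2: "v$2 = u$2" using assms(4) by simp_all
  have u0: "u \<noteq> 0" using assms(3) by auto
  have v0: "v \<noteq> 0" using assms(3) v2 by auto
  have LE: "Lalpha \<alpha> u v f = (\<lambda>x. - integral {0..} (\<lambda>t. u \<bullet> f (x + t *\<^sub>R u)) + \<alpha> * integral {0..} (\<lambda>t. v \<bullet> f (x + t *\<^sub>R v)))"
    by (rule ext) (simp add: Lalpha_def)
  have TE: "Talpha \<alpha> u v f = (\<lambda>x. - integral {0..} (\<lambda>t. perp u \<bullet> f (x + t *\<^sub>R u)) + \<alpha> * integral {0..} (\<lambda>t. perp v \<bullet> f (x + t *\<^sub>R v)))"
    by (rule ext) (simp add: Talpha_def)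
  have ip: "a \<bullet> b = a$1 * b$1 + a$2 * b$2" for a b :: "real^2"
    by (simp add: inner_vec_def sum_2)
  have pu1: "perp u $ 1 = - u$2" and pu2: "perp u $ 2 = u$1"
    and pv1: "perp v $ 1 = - u$2" and pv2: "perp v $ 2 = - u$1"
    by (simp_all add: perp_def v1 v2)
  note DE = Dexp[OF P(1)]
  show "dirD u (dirD v (Lalpha \<alpha> u v f)) x
               = dt1 \<alpha> u (\<lambda>y. f y $ 2) x - dt2 \<alpha> u (\<lambda>y. f y $ 1) x
           \<and> dt1 \<alpha> u (\<lambda>y. f y $ 2) x - dt2 \<alpha> u (\<lambda>y. f y $ 1) x = tdelta_perp \<alpha> u f x
           \<and> dirD u (dirD v (Talpha \<alpha> u v f)) x
               = - (dt1 \<alpha> u (\<lambda>y. f y $ 1) x + dt2 \<alpha> u (\<lambda>y. f y $ 2) x)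
           \<and> - (dt1 \<alpha> u (\<lambda>y. f y $ 1) x + dt2 \<alpha> u (\<lambda>y. f y $ 2) x) = - tdelta \<alpha> u f x"
  proof (intro conjI)
    show "dt1 \<alpha> u (\<lambda>y. f y $ 2) x - dt2 \<alpha> u (\<lambda>y. f y $ 1) x = tdelta_perp \<alpha> u f x"
      by (simp add: tdelta_perp_def)
    show "- (dt1 \<alpha> u (\<lambda>y. f y $ 1) x + dt2 \<alpha> u (\<lambda>y. f y $ 2) x) = - tdelta \<alpha> u f x"
      by (simp add: tdelta_def)
    show "dirD u (dirD v (Lalpha \<alpha> u v f)) x = dt1 \<alpha> u (\<lambda>y. f y $ 2) x - dt2 \<alpha> u (\<lambda>y. f y $ 1) x"
      unfolding LE main_generic[OF f u0 v0] unfolding ip DE dt1_def dt2_def v1 v2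
      by (simp add: power2_eq_square algebra_simps)
    show "dirD u (dirD v (Talpha \<alpha> u v f)) x = - (dt1 \<alpha> u (\<lambda>y. f y $ 1) x + dt2 \<alpha> u (\<lambda>y. f y $ 2) x)"
      unfolding TE main_generic[OF f u0 v0] unfolding ip DE dt1_def dt2_def v1 v2 pu1 pu2 pv1 pv2
      by (simp add: power2_eq_square algebra_simps)
  qed
qed

end
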